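(* Let $S=K[t_1,\ldots,t_s]$ over a field $K$ with $s\geq2$, let $d_1\leq\cdots\leq d_s$ be positive integers with $d_1\geq2$, and let $L$ be the ideal generated by all $t_it_j^{d_j}$ with $1\leq i<j\leq s$. Let $t^a=t_r^{a_r}\cdots t_s^{a_s}$ be a monomial not in $L$ (a standard monomial of $S/L$ with respect to any monomial order), where $1\leq r\leq s$, $a_r\geq1$ and $a_i=0$ for $i<r$. Then $0\leq a_i\leq d_i-1$ for $i>r$ and $$\deg(S/(L,t^a))=\begin{cases}\deg(S/L)-\sum_{i=2}^{s}(d_i-a_i)\cdots(d_s-a_s)-1 & \text{if } r=s,\ a_s\leq d_s,\\ \deg(S/L)-1 & \text{if } r=s,\ a_s\geq d_s+1,\\ \deg(S/L)-\sum_{i=2}^{r+1}(d_i-a_i)\cdots(d_s-a_s) & \text{if } r<s,\ a_r\leq d_r,\\ \deg(S/L)-(d_{r+1}-a_{r+1})\cdots(d_s-a_s) & \text{if } r<s,\ a_r\geq d_r+1.\end{cases}$$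
   Context: For a graded ideal $J$ with Hilbert function $H_J(d)=\dim_K(S_d/J_d)$ and $k=\dim(S/J)$, $\deg(S/J)=(k-1)!\lim_{d\to\infty}H_J(d)/d^{k-1}$ if $k\geq1$ and $\dim_K(S/J)$ if $k=0$. In the formulas $a_i=0$ for $i<r$. *)

theory Defs
  imports Complex_Main
begin

text \<open>Monomials of S = K[t_1,...,t_s] are represented by exponent vectors
  m :: nat => nat with support in {1..s}. A monomial ideal is given by a set G of
  monomial generators. Since the quotient S/J of a monomial ideal J has the
  standard monomials (monomials not in J) as a K-basis, its Hilbert function
  H_J(d) = dim_K (S_d/J_d) is the number of standard monomials of degree d.\<close>

definition smonos :: "nat \<Rightarrow> (nat \<Rightarrow> nat) set" where
  "smonos s = {m. \<forall>i. (i < 1 \<or> s < i) \<longrightarrow> m i = 0}"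

definition mdvd :: "(nat \<Rightarrow> nat) \<Rightarrow> (nat \<Rightarrow> nat) \<Rightarrow> bool" where
  "mdvd g m \<longleftrightarrow> (\<forall>i. g i \<le> m i)"

definition in_mideal :: "(nat \<Rightarrow> nat) set \<Rightarrow> (nat \<Rightarrow> nat) \<Rightarrow> bool" where
  "in_mideal G m \<longleftrightarrow> (\<exists>g\<in>G. mdvd g m)"

definition mtdeg :: "nat \<Rightarrow> (nat \<Rightarrow> nat) \<Rightarrow> nat" where
  "mtdeg s m = (\<Sum>i=1..s. m i)"

definition hilb :: "nat \<Rightarrow> (nat \<Rightarrow> nat) set \<Rightarrow> nat \<Rightarrow> real" where
  "hilb s G d = real (card {m \<in> smonos s. mtdeg s m = d \<and> \<not> in_mideal G m})"

text \<open>Krull dimension of S/J, read off from the Hilbert function: k = 0 iff H is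
  eventually 0, otherwise k-1 is the degree of the Hilbert polynomial. Equivalently,
  k is the least k with H(d)/d^k -> 0.\<close>
definition kdim :: "nat \<Rightarrow> (nat \<Rightarrow> nat) set \<Rightarrow> nat" where
  "kdim s G = (LEAST k. (\<lambda>d. hilb s G d / real d ^ k) \<longlonglongrightarrow> 0)"

definition mdegree :: "nat \<Rightarrow> (nat \<Rightarrow> nat) set \<Rightarrow> real" where
  "mdegree s G = (let k = kdim s G in
     if k = 0 then real (card {m \<in> smonos s. \<not> in_mideal G m})
     else fact (k - 1) * lim (\<lambda>d. hilb s G d / real d ^ (k - 1)))"

definition Lgens :: "nat \<Rightarrow> (nat \<Rightarrow> nat) \<Rightarrow> (nat \<Rightarrow> nat) set" where
  "Lgens s dd = {(\<lambda>k. (if k = i then 1 else 0) + (if k = j then dd j else 0)) | i j.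
                   1 \<le> i \<and> i < j \<and> j \<le> s}"

end

theory Submission imports Defs "HOL-Library.FuncSet" begin

lemma notin_L:
  "(\<not> in_mideal (Lgens s dd) m) \<longleftrightarrow> (\<forall>i j. 1 \<le> i \<and> i < j \<and> j \<le> s \<longrightarrow> m i = 0 \<or> m j < dd j)"
proof
  assume H: "\<not> in_mideal (Lgens s dd) m"
  show "\<forall>i j. 1 \<le> i \<and> i < j \<and> j \<le> s \<longrightarrow> m i = 0 \<or> m j < dd j"
  proof (intro allI impI, rule ccontr)
    fix i j assume ij: "1 \<le> i \<and> i < j \<and> j \<le> s" and c: "\<not> (m i = 0 \<or> m j < dd j)"
    let ?g = "(\<lambda>k. (if k = i then 1 else 0) + (if k = j then dd j else 0))"
    have "?g \<in> Lgens s dd" using ij unfolding Lgens_def by blast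
    moreover have "mdvd ?g m" using c ij unfolding mdvd_def by auto
    ultimately show False using H unfolding in_mideal_def by blast
  qed
next
  assume H: "\<forall>i j. 1 \<le> i \<and> i < j \<and> j \<le> s \<longrightarrow> m i = 0 \<or> m j < dd j"
  show "\<not> in_mideal (Lgens s dd) m"
  proof
    assume "in_mideal (Lgens s dd) m"
    then obtain i j where ij: "1 \<le> i" "i < j" "j \<le> s" and
      d: "mdvd (\<lambda>k. (if k = i then 1 else 0) + (if k = j then dd j else 0)) m"
      unfolding in_mideal_def Lgens_def by blast
    have "(if i = i then 1 else 0) + (if i = j then dd j else 0) \<le> m i" using d unfolding mdvd_def by blast
    then have "1 \<le> m i" using ij by simp
    moreover have "(if j = i then 1 else 0) + (if j = j then dd j else 0) \<le> m j" using d unfolding mdvd_def by blast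
    then have "dd j \<le> m j" using ij by simp
    ultimately show False using H ij by force
  qed
qed

lemma sum_split3:
  fixes r0 s :: nat
  assumes "1 \<le> r0" "r0 \<le> s"
  shows "(\<Sum>i=1..s. g i) = (\<Sum>i\<in>{1..<r0}. g i) + g r0 + (\<Sum>i\<in>{r0<..s}. (g i::nat))"
proof -
  have e: "{1..s} = {1..<r0} \<union> insert r0 {r0<..s}" using assms by auto
  show ?thesis using assms unfolding e by (subst sum.union_disjoint) auto
qed

lemma lead:
  assumes "m \<in> smonos s" "mtdeg s m > 0"
  shows "1 \<le> (LEAST i. 0 < m i) \<and> (LEAST i. 0 < m i) \<le> s \<and> 0 < m (LEAST i. 0 < m i)
         \<and> (\<forall>j < (LEAST i. 0 < m i). m j = 0)"
proof -
  have "\<exists>i\<in>{1..s}. 0 < m i"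
  proof (rule ccontr)
    assume "\<not> (\<exists>i\<in>{1..s}. 0 < m i)"
    then have "\<forall>i\<in>{1..s}. m i = 0" by auto
    then have "mtdeg s m = 0" unfolding mtdeg_def by simp
    then show False using assms(2) by simp
  qed
  then obtain i where i: "i \<in> {1..s}" "0 < m i" by blast
  have "\<forall>i. (i < 1 \<or> s < i) \<longrightarrow> m i = 0" using assms(1) unfolding smonos_def by simp
  then have m0: "m 0 = 0" by simp
  have a: "0 < m (LEAST i. 0 < m i)" using i(2) by (rule LeastI)
  have b: "(LEAST i. 0 < m i) \<le> i" using i(2) by (rule Least_le)
  have c: "\<forall>j < (LEAST i. 0 < m i). m j = 0"
  proof (intro allI impI)
    fix j assume "j < (LEAST i. 0 < m i)"
    then have "\<not> 0 < m j" by (rule not_less_Least)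
    then show "m j = 0" by simp
  qed
  have d0: "(LEAST i. 0 < m i) \<noteq> 0"
  proof
    assume "(LEAST i. 0 < m i) = 0"
    then show False using a m0 by simp
  qed
  then have d: "1 \<le> (LEAST i. 0 < m i)" by simp
  have e: "(LEAST i. 0 < m i) \<le> s" using b i(1) by simp
  show ?thesis using a c d e by (intro conjI)
qed

definition Mset :: "nat \<Rightarrow> (nat\<Rightarrow>nat) \<Rightarrow> (nat\<Rightarrow>nat) \<Rightarrow> nat \<Rightarrow> (nat\<Rightarrow>nat) set" where
 "Mset s dd lo K = {m \<in> smonos s. mtdeg s m = K \<and> \<not> in_mideal (Lgens s dd) m \<and> mdvd lo m}"

lemma count:
  assumes lo0: "\<And>i. i < 1 \<or> s < i \<Longrightarrow> lo i = 0"
    and K: "K \<ge> 1 + (\<Sum>j=1..s. dd j) + (\<Sum>j=1..s. lo j)"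
  shows "finite (Mset s dd lo K) \<and> card (Mset s dd lo K) = (\<Sum>r0\<in>{r0\<in>{1..s}. \<forall>j<r0. lo j = 0}. \<Prod>j\<in>{r0<..s}. (dd j - lo j))"
proof -
  define T where "T = Sigma {r0\<in>{1..s}. \<forall>j<r0. lo j = 0} (\<lambda>r0. PiE {r0<..s} (\<lambda>j. {lo j..<dd j}))"
  define F where "F = (\<lambda>m::nat\<Rightarrow>nat. ((LEAST i. 0 < m i), restrict m {(LEAST i. 0 < m i)<..s}))"
  define G where "G = (\<lambda>(r0::nat, f::nat\<Rightarrow>nat). (\<lambda>i. if r0 < i \<and> i \<le> s then f i else if i = r0 then K - (\<Sum>j\<in>{r0<..s}. f j) else 0))"
  have Kpos: "K > 0" using K by simp
  have bnd: "(\<Sum>j\<in>{r0<..s}. f j) + 1 + lo r0 \<le> K" if "r0 \<in> {1..s}" "f \<in> PiE {r0<..s} (\<lambda>j. {lo j..<dd j})" for r0 f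
  proof -
    have "\<forall>j\<in>{r0<..s}. f j < dd j" using that(2) by (auto simp: PiE_iff)
    then have "(\<Sum>j\<in>{r0<..s}. f j) \<le> (\<Sum>j\<in>{r0<..s}. dd j)"
      by (intro sum_mono) (simp add: less_imp_le)
    also have "\<dots> \<le> (\<Sum>j=1..s. dd j)" by (rule sum_mono2) (use that in auto)
    finally have 1: "(\<Sum>j\<in>{r0<..s}. f j) \<le> (\<Sum>j=1..s. dd j)" .
    have 2: "lo r0 \<le> (\<Sum>j=1..s. lo j)" using that(1) by (intro member_le_sum) auto
    show ?thesis using 1 2 K by linarith
  qed
  have memM: "m \<in> Mset s dd lo K \<longleftrightarrow> m \<in> smonos s \<and> mtdeg s m = K \<and>
       (\<forall>i j. 1 \<le> i \<and> i < j \<and> j \<le> s \<longrightarrow> m i = 0 \<or> m j < dd j) \<and> (\<forall>i. lo i \<le> m i)" for m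
    unfolding Mset_def mdvd_def mem_Collect_eq notin_L[symmetric] by (rule refl)
  have bij: "bij_betw F (Mset s dd lo K) T"
  proof (rule bij_betw_byWitness[where f'=G])
    show "\<forall>m\<in>Mset s dd lo K. G (F m) = m"
    proof
      fix m assume mM: "m \<in> Mset s dd lo K"
      define r0 where "r0 = (LEAST i. 0 < m i)"
      note mm0 = mM[unfolded memM]
      note mm = conjunct1[OF mm0] conjunct1[OF conjunct2[OF mm0]] conjunct1[OF conjunct2[OF conjunct2[OF mm0]]]
        conjunct2[OF conjunct2[OF conjunct2[OF mm0]]]
      have LLa: "0 < mtdeg s m" using mm(2) Kpos by simp
      have LL: "1 \<le> r0 \<and> r0 \<le> s \<and> 0 < m r0 \<and> (\<forall>j<r0. m j = 0)"
        unfolding r0_def by (rule lead[OF mm(1) LLa])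
      note L = conjunct1[OF LL] conjunct1[OF conjunct2[OF LL]] conjunct1[OF conjunct2[OF conjunct2[OF LL]]]
        conjunct2[OF conjunct2[OF conjunct2[OF LL]]]
      have smA: "\<forall>i. (i < 1 \<or> s < i) \<longrightarrow> m i = 0" using mm(1) unfolding smonos_def by simp
      have sm: "m i = 0" if "i < 1 \<or> s < i" for i by (rule smA[rule_format, OF that])
      have "K = (\<Sum>i=1..s. m i)" using mm(2) unfolding mtdeg_def by simp
      also have "\<dots> = (\<Sum>i\<in>{1..<r0}. m i) + m r0 + (\<Sum>i\<in>{r0<..s}. m i)" by (rule sum_split3[OF L(1) L(2)])
      also have "(\<Sum>i\<in>{1..<r0}. m i) = 0" using L(4) by (intro sum.neutral) simp
      finally have Kr: "K - (\<Sum>i\<in>{r0<..s}. m i) = m r0" by simp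
      have FG: "F m = (r0, restrict m {r0<..s})" unfolding F_def r0_def by simp
      show "G (F m) = m" unfolding FG G_def
      proof (rule ext)
        fix i show "(case (r0, restrict m {r0<..s}) of (r0, f) \<Rightarrow> \<lambda>i. if r0 < i \<and> i \<le> s then f i else if i = r0 then K - (\<Sum>j\<in>{r0<..s}. f j) else 0) i = m i"
        proof -
          consider "r0 < i \<and> i \<le> s" | "i = r0" | "i < r0" | "s < i" by linarith
          then show ?thesis
          proof cases
            case 1 then show ?thesis by simp
          next
            case 2 then show ?thesis using Kr by simp
          next
            case 3 then show ?thesis using L(4) by simp
          next
            case 4 then show ?thesis using sm[of i] L(2) by simp
          qed
        qed
      qed
    qed
    show "\<forall>x\<in>T. F (G x) = x"
    proof
      fix x assume xT: "x \<in> T"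
      obtain r0 f where x: "x = (r0, f)" by fastforce
      have r0: "r0 \<in> {1..s}" "\<forall>j<r0. lo j = 0" and f: "f \<in> PiE {r0<..s} (\<lambda>j. {lo j..<dd j})"
        using xT unfolding x T_def by auto
      have b: "(\<Sum>j\<in>{r0<..s}. f j) + 1 + lo r0 \<le> K" using bnd r0 f by blast
      define g where "g = G x"
      have g: "g = (\<lambda>i. if r0 < i \<and> i \<le> s then f i else if i = r0 then K - (\<Sum>j\<in>{r0<..s}. f j) else 0)"
        unfolding g_def G_def x by simp
      have le: "(LEAST i. 0 < g i) = r0"
      proof (rule Least_equality)
        show "0 < g r0" unfolding g using b r0 by auto
        show "\<And>y. 0 < g y \<Longrightarrow> r0 \<le> y" unfolding g by (auto split: if_splits)
      qed
      have "restrict g {r0<..s} = f"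
      proof (rule ext)
        fix i show "restrict g {r0<..s} i = f i" using f unfolding g by (auto simp: PiE_def extensional_def)
      qed
      then have "F g = (r0, f)" unfolding F_def le by simp
      then show "F (G x) = x" unfolding g_def x by simp
    qed
    show "F ` Mset s dd lo K \<subseteq> T"
    proof
      fix y assume "y \<in> F ` Mset s dd lo K"
      then obtain m where mM: "m \<in> Mset s dd lo K" and y: "y = F m" by blast
      define r0 where "r0 = (LEAST i. 0 < m i)"
      note mm0 = mM[unfolded memM]
      note mm = conjunct1[OF mm0] conjunct1[OF conjunct2[OF mm0]] conjunct1[OF conjunct2[OF conjunct2[OF mm0]]]
        conjunct2[OF conjunct2[OF conjunct2[OF mm0]]]
      have LLa: "0 < mtdeg s m" using mm(2) Kpos by simp
      have LL: "1 \<le> r0 \<and> r0 \<le> s \<and> 0 < m r0 \<and> (\<forall>j<r0. m j = 0)"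
        unfolding r0_def by (rule lead[OF mm(1) LLa])
      note L = conjunct1[OF LL] conjunct1[OF conjunct2[OF LL]] conjunct1[OF conjunct2[OF conjunct2[OF LL]]]
        conjunct2[OF conjunct2[OF conjunct2[OF LL]]]
      have FG: "F m = (r0, restrict m {r0<..s})" unfolding F_def r0_def by simp
      have st: "m j < dd j" if "r0 < j" "j \<le> s" for j
      proof -
        have "m r0 = 0 \<or> m j < dd j" using mm(3) L(1) that by blast
        then show ?thesis using L(3) by simp
      qed
      have lo: "\<And>i. lo i \<le> m i" using mm(4) by blast
      have "\<forall>j<r0. lo j = 0" using L lo by (metis le_zero_eq)
      moreover have "restrict m {r0<..s} \<in> PiE {r0<..s} (\<lambda>j. {lo j..<dd j})"
        using st lo by auto
      ultimately show "y \<in> T" unfolding y FG T_def using L by auto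
    qed
    show "G ` T \<subseteq> Mset s dd lo K"
    proof
      fix y assume "y \<in> G ` T"
      then obtain x where xT: "x \<in> T" and y: "y = G x" by blast
      obtain r0 f where x: "x = (r0, f)" by fastforce
      have r0: "r0 \<in> {1..s}" "\<forall>j<r0. lo j = 0" and f: "f \<in> PiE {r0<..s} (\<lambda>j. {lo j..<dd j})"
        using xT unfolding x T_def by auto
      have b: "(\<Sum>j\<in>{r0<..s}. f j) + 1 + lo r0 \<le> K" using bnd r0 f by blast
      have g: "y = (\<lambda>i. if r0 < i \<and> i \<le> s then f i else if i = r0 then K - (\<Sum>j\<in>{r0<..s}. f j) else 0)"
        unfolding y G_def x by simp
      have sm: "y \<in> smonos s" unfolding g smonos_def using r0 by auto
      have "(\<Sum>i=1..s. y i) = (\<Sum>i\<in>{1..<r0}. y i) + y r0 + (\<Sum>i\<in>{r0<..s}. y i)"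
        using sum_split3 r0 by auto
      also have "(\<Sum>i\<in>{1..<r0}. y i) = 0" unfolding g by auto
      also have "(\<Sum>i\<in>{r0<..s}. y i) = (\<Sum>i\<in>{r0<..s}. f i)" unfolding g by (intro sum.cong) auto
      also have "y r0 = K - (\<Sum>j\<in>{r0<..s}. f j)" unfolding g by simp
      finally have deg: "mtdeg s y = K" unfolding mtdeg_def using b by simp
      have std: "\<forall>i j. 1 \<le> i \<and> i < j \<and> j \<le> s \<longrightarrow> y i = 0 \<or> y j < dd j"
        using f unfolding g by (auto simp: PiE_iff)
      have lo: "\<forall>i. lo i \<le> y i"
      proof
        fix i
        consider "r0 < i \<and> i \<le> s" | "i = r0" | "i < r0" | "s < i" by linarith
        then show "lo i \<le> y i"
        proof cases
          case 1 then show ?thesis using f unfolding g by (auto simp: PiE_iff)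
        next
          case 2 then show ?thesis using b unfolding g by auto
        next
          case 3 then show ?thesis using r0 by auto
        next
          case 4 then show ?thesis using lo0 by auto
        qed
      qed
      show "y \<in> Mset s dd lo K" unfolding memM using sm deg std lo by blast
    qed
  qed
  have fT: "finite T" unfolding T_def by (auto intro!: finite_SigmaI finite_PiE)
  have "card (Mset s dd lo K) = card T" using bij by (rule bij_betw_same_card)
  also have "card T = (\<Sum>r0\<in>{r0\<in>{1..s}. \<forall>j<r0. lo j = 0}. \<Prod>j\<in>{r0<..s}. (dd j - lo j))"
    unfolding T_def by (subst card_SigmaI) (auto simp: card_PiE intro!: finite_PiE)
  finally show ?thesis using bij_betw_finite[OF bij] fT by blast
qed

lemma mdegree_const:
  assumes "\<forall>k\<ge>N. hilb s G k = c" "c > 0"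
  shows "mdegree s G = c"
proof -
  have ev: "eventually (\<lambda>k. hilb s G k = c) sequentially" using assms(1) eventually_sequentially by blast
  have h0: "(\<lambda>d. hilb s G d) \<longlonglongrightarrow> c" using ev by (rule tendsto_eventually)
  have "(\<lambda>d. c / real d) \<longlonglongrightarrow> 0"
    by (rule tendsto_divide_0[OF tendsto_const filterlim_at_top_imp_at_infinity[OF filterlim_real_sequentially]])
  moreover have "eventually (\<lambda>d. c / real d = hilb s G d / real d ^ 1) sequentially"
    using ev by eventually_elim simp
  ultimately have h1: "(\<lambda>d. hilb s G d / real d ^ 1) \<longlonglongrightarrow> 0" by (rule Lim_transform_eventually)
  have nz: "\<not> (\<lambda>d. hilb s G d / real d ^ 0) \<longlonglongrightarrow> 0"
  proof
    assume "(\<lambda>d. hilb s G d / real d ^ 0) \<longlonglongrightarrow> 0"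
    then have "(\<lambda>d. hilb s G d) \<longlonglongrightarrow> 0" by simp
    with h0 have "c = 0" using LIMSEQ_unique by blast
    with assms(2) show False by simp
  qed
  have kd: "kdim s G = 1" unfolding kdim_def
  proof (rule Least_equality)
    show "(\<lambda>d. hilb s G d / real d ^ 1) \<longlonglongrightarrow> 0" by (rule h1)
    show "\<And>y. (\<lambda>d. hilb s G d / real d ^ y) \<longlonglongrightarrow> 0 \<Longrightarrow> 1 \<le> y"
      using nz by (metis less_one not_le)
  qed
  show ?thesis unfolding mdegree_def kd using limI[OF h0] by simp
qed

lemma wit:
  fixes s N p :: nat and dd :: "nat\<Rightarrow>nat" assumes "p \<ge> 1" "p \<le> s" "\<forall>j. p < j \<and> j \<le> s \<longrightarrow> dd j \<noteq> 0"
  shows "(\<lambda>i. if i = p then N else 0) \<in> Mset s dd (\<lambda>_. 0) N"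
proof -
  have "(\<lambda>i. if i = p then N else (0::nat)) \<in> smonos s" using assms unfolding smonos_def by auto
  moreover have "mtdeg s (\<lambda>i. if i = p then N else 0) = N" using assms unfolding mtdeg_def by simp
  moreover have "\<forall>i j. 1 \<le> i \<and> i < j \<and> j \<le> s \<longrightarrow> (if i = p then N else 0) = 0 \<or> (if j = p then N else 0) < dd j"
    using assms by auto
  ultimately show ?thesis unfolding Mset_def notin_L mdvd_def by auto
qed

theorem proposition5p3:
  fixes s r :: nat and dd a :: "nat \<Rightarrow> nat"
  assumes "s \<ge> 2"
    and "\<And>i j. 1 \<le> i \<Longrightarrow> i \<le> j \<Longrightarrow> j \<le> s \<Longrightarrow> dd i \<le> dd j"
    and "dd 1 \<ge> 2"
    and "1 \<le> r" and "r \<le> s"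
    and "a r \<ge> 1"
    and "\<And>i. i < r \<or> s < i \<Longrightarrow> a i = 0"
    and "\<not> in_mideal (Lgens s dd) a"
  shows "(\<forall>i. r < i \<and> i \<le> s \<longrightarrow> a i \<le> dd i - 1) \<and>
    mdegree s (Lgens s dd \<union> {a}) =
      (if r = s then
         (if a s \<le> dd s
          then mdegree s (Lgens s dd)
                 - (\<Sum>i=2..s. \<Prod>j=i..s. (real (dd j) - real (a j))) - 1
          else mdegree s (Lgens s dd) - 1)
       else
         (if a r \<le> dd r
          then mdegree s (Lgens s dd)
                 - (\<Sum>i=2..r+1. \<Prod>j=i..s. (real (dd j) - real (a j)))
          else mdegree s (Lgens s dd)
                 - (\<Prod>j=r+1..s. (real (dd j) - real (a j)))))"
proof -
  let ?L = "Lgens s dd"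
  define z where "z = (\<lambda>_::nat. 0::nat)"
  define N where "N = 1 + (\<Sum>j=1..s. dd j) + (\<Sum>j=1..s. a j)"
  have a0: "\<And>i. i < 1 \<or> s < i \<Longrightarrow> a i = 0" using assms(4,7) by auto
  have part1: "\<forall>i. r < i \<and> i \<le> s \<longrightarrow> a i \<le> dd i - 1"
  proof (intro allI impI)
    fix i assume "r < i \<and> i \<le> s"
    then have "a r = 0 \<or> a i < dd i" using assms(8,4) unfolding notin_L by blast
    then show "a i \<le> dd i - 1" using assms(6) by auto
  qed
  define cL where "cL = (\<Sum>r0\<in>{r0\<in>{1..s}. \<forall>j<r0. z j = 0}. \<Prod>j\<in>{r0<..s}. (dd j - z j))"
  define cA where "cA = (\<Sum>r0\<in>{r0\<in>{1..s}. \<forall>j<r0. a j = 0}. \<Prod>j\<in>{r0<..s}. (dd j - a j))"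
  have cntz: "finite (Mset s dd z k) \<and> card (Mset s dd z k) = cL" if "k \<ge> N" for k
    unfolding cL_def using that by (intro count) (auto simp: z_def N_def)
  have cnta: "finite (Mset s dd a k) \<and> card (Mset s dd a k) = cA" if "k \<ge> N" for k
    unfolding cA_def using that a0 by (intro count) (auto simp: N_def)
  have setL: "{m \<in> smonos s. mtdeg s m = k \<and> \<not> in_mideal ?L m} = Mset s dd z k" for k
    unfolding Mset_def mdvd_def z_def by auto
  have setLa: "{m \<in> smonos s. mtdeg s m = k \<and> \<not> in_mideal (?L \<union> {a}) m} = Mset s dd z k - Mset s dd a k" for k
    unfolding Mset_def mdvd_def z_def in_mideal_def by auto
  have sub: "Mset s dd a k \<subseteq> Mset s dd z k" for k
    unfolding Mset_def mdvd_def z_def by auto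
  have hL: "\<forall>k\<ge>N. hilb s ?L k = real cL"
    unfolding hilb_def setL using cntz by auto
  have hLa: "\<forall>k\<ge>N. hilb s (?L \<union> {a}) k = real (cL - cA)"
    unfolding hilb_def setLa using cntz cnta sub by (auto simp: card_Diff_subset)
  define w where "w = (if r < s then (\<lambda>i. if i = s then N else 0) else (\<lambda>i. if i = 1 then N else (0::nat)))"
  have ddpos: "\<And>j. 1 \<le> j \<Longrightarrow> j \<le> s \<Longrightarrow> dd j \<ge> 2" using assms(2,3) by (meson le_trans order_refl)
  have ddnz: "\<And>j. 1 \<le> j \<Longrightarrow> j \<le> s \<Longrightarrow> dd j \<noteq> 0" using ddpos by fastforce
  have wz: "w \<in> Mset s dd z N"
  proof (cases "r < s")
    case True
    then show ?thesis unfolding w_def z_def using wit[of s s dd N] assms(1) by simp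
  next
    case False
    then show ?thesis unfolding w_def z_def using wit[of 1 s dd N] assms(1) ddnz by simp
  qed
  have wa: "w \<notin> Mset s dd a N"
  proof
    assume "w \<in> Mset s dd a N"
    then have "a r \<le> w r" unfolding Mset_def mdvd_def by auto
    moreover have "w r = 0" unfolding w_def using assms(1,4,5) by auto
    ultimately show False using assms(6) by simp
  qed
  have "card (Mset s dd z N - Mset s dd a N) > 0"
    using wz wa cntz[of N] by (subst card_gt_0_iff) auto
  then have pos: "cL - cA > 0" using cntz[of N] cnta[of N] sub[of N] by (simp add: card_Diff_subset)
  have mL: "mdegree s ?L = real cL"
    by (rule mdegree_const[OF hL]) (use pos in simp)
  have mLa: "mdegree s (?L \<union> {a}) = real cL - real cA"
    using mdegree_const[OF hLa] pos by (simp add: of_nat_diff)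
  have Aset: "{r0\<in>{1..s}. \<forall>j<r0. a j = 0} = {1..r}"
  proof (rule set_eqI, rule iffI)
    fix r0 assume h: "r0 \<in> {r0\<in>{1..s}. \<forall>j<r0. a j = 0}"
    then have "\<not> r < r0" using assms(6) by (metis (mono_tags, lifting) mem_Collect_eq not_one_le_zero)
    then show "r0 \<in> {1..r}" using h by auto
  next
    fix r0 assume "r0 \<in> {1..r}"
    then show "r0 \<in> {r0\<in>{1..s}. \<forall>j<r0. a j = 0}" using assms(5,7) by auto
  qed
  define P where "P = (\<lambda>i. \<Prod>j=i..s. (dd j - a j))"
  have cA2: "cA = (\<Sum>i=2..r+1. P i)"
  proof -
    have "cA = (\<Sum>r0=1..r. P (Suc r0))" unfolding cA_def Aset P_def
      by (intro sum.cong) (auto simp: atLeastSucAtMost_greaterThanAtMost)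
    also have "\<dots> = (\<Sum>i=Suc 1..Suc r. P i)" by (rule sum.shift_bounds_cl_Suc_ivl[symmetric])
    finally show ?thesis by (simp add: numeral_2_eq_2 del: sum.cl_ivl_Suc)
  qed
  have Ps1: "P (s+1) = 1" unfolding P_def by simp
  show ?thesis
  proof (cases "a r \<le> dd r")
    case True
    have alle: "\<And>j. 1 \<le> j \<Longrightarrow> j \<le> s \<Longrightarrow> a j \<le> dd j"
    proof -
      fix j assume j: "1 \<le> j" "j \<le> s"
      consider "j < r" | "j = r" | "r < j" by linarith
      then show "a j \<le> dd j" using True part1 assms(7) j by cases auto
    qed
    have rP: "real (P i) = (\<Prod>j=i..s. (real (dd j) - real (a j)))" if "1 \<le> i" for i
      unfolding P_def of_nat_prod using that alle by (intro prod.cong) (auto simp: of_nat_diff)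
    have rcA: "real cA = (\<Sum>i=2..r+1. \<Prod>j=i..s. (real (dd j) - real (a j)))"
      unfolding cA2 of_nat_sum using rP by (intro sum.cong) auto
    show ?thesis
    proof (cases "r = s")
      case True
      have "(\<Sum>i=2..r+1. \<Prod>j=i..s. (real (dd j) - real (a j))) = (\<Sum>i=2..s. \<Prod>j=i..s. (real (dd j) - real (a j))) + 1"
        using True assms(1) by simp
      then show ?thesis using part1 mL mLa rcA True \<open>a r \<le> dd r\<close> by simp
    next
      case False
      then show ?thesis using part1 mL mLa rcA \<open>a r \<le> dd r\<close> by simp
    qed
  next
    case False
    have P0: "P i = 0" if "2 \<le> i" "i \<le> r" for i
      unfolding P_def using that False assms(5) by (intro prod_zero) (auto intro!: bexI[where x=r])
    have "(\<Sum>i=2..Suc r. P i) = (\<Sum>i=2..r. P i) + P (Suc r)"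
      using assms(4) by (subst sum.cl_ivl_Suc) simp
    then have "cA = (\<Sum>i=2..r. P i) + P (r+1)" unfolding cA2 by simp
    also have "(\<Sum>i=2..r. P i) = 0" using P0 by simp
    finally have cA3: "cA = P (r+1)" by simp
    show ?thesis
    proof (cases "r = s")
      case True
      then show ?thesis using part1 mL mLa cA3 Ps1 False by simp
    next
      case F2: False
      have "real (P (r+1)) = (\<Prod>j=r+1..s. (real (dd j) - real (a j)))"
      proof -
        have le: "\<And>j. r < j \<Longrightarrow> j \<le> s \<Longrightarrow> a j \<le> dd j" using part1 by (meson diff_le_self le_trans)
        show ?thesis unfolding P_def of_nat_prod using le by (intro prod.cong) (auto simp: of_nat_diff)
      qed
      then show ?thesis using part1 mL mLa cA3 False F2 by simp
    qed
  qed
qed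

end
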